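(* Fix $C,\mu_0,d,f_0\in\mathbb{R}$ and $a,b\in[-\infty,\infty]$ with $a<0<b$, and let $\mu:(a,b)\to\mathbb{R}$ solve the ODE $\mu'(x)-\mu(x)^2=C$, $\mu(0)=\mu_0$. Define $f,g:(a,b)\to\mathbb{R}$ by $$f(x):=d\int_0^x\exp\Big(2\int_0^y\mu(z)\,\mathrm{d}z\Big)\mathrm{d}y+f_0,\qquad g(x):=\exp\Big(-\int_0^x\mu(z)\,\mathrm{d}z\Big).$$ Then there exist $e_1,e_2,e_3\in\mathbb{R}$ such that $f'(x)=e_1f(x)^2+e_2f(x)+e_3$ on $(a,b)$ with $f(0)=f_0$, and $g$ solves $-g''(x)=Cg(x)$ on $(a,b)$ with $g(0)=1$, $g'(0)=-\mu_0$. *)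

theory Defs
  imports "HOL-Probability.Probability"
begin

end

theory Submission
  imports Defs
begin

lemma between_in_I:
  assumes "0 \<in> einterval a b" "x \<in> einterval a b" "min 0 x \<le> y" "y \<le> max 0 x"
  shows "y \<in> einterval a b"
proof -
  have "a < ereal (min 0 x)" using assms(1,2) by (auto simp: einterval_iff min_def)
  moreover have "ereal (max 0 x) < b" using assms(1,2) by (auto simp: einterval_iff max_def)
  moreover have "ereal (min 0 x) \<le> ereal y" "ereal y \<le> ereal (max 0 x)" using assms(3,4) by (simp_all only: ereal_less_eq(3))
  ultimately show ?thesis
    unfolding einterval_iff by (meson less_le_trans le_less_trans)
qed

lemma const_on_I:
  fixes h :: "real \<Rightarrow> real"
  assumes "0 \<in> einterval a b" "x \<in> einterval a b"
    and d: "\<And>y. y \<in> einterval a b \<Longrightarrow> DERIV h y :> 0"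
  shows "h x = h 0"
proof -
  have cont: "continuous_on {min 0 x..max 0 x} h"
    by (intro continuous_at_imp_continuous_on ballI DERIV_isCont[OF d] between_in_I[OF assms(1,2)]) auto
  consider "x < 0" | "x = 0" | "x > 0" by linarith
  then show ?thesis
  proof cases
    case 1
    then show ?thesis using cont
      by (intro DERIV_isconst_end[symmetric] d between_in_I[OF assms(1,2)]) auto
  next
    case 3
    then show ?thesis using cont
      by (intro DERIV_isconst_end d between_in_I[OF assms(1,2)]) auto
  qed simp
qed

lemma FTC_I:
  fixes h :: "real \<Rightarrow> real"
  assumes "0 \<in> einterval a b" "x \<in> einterval a b"
    and contf: "\<And>y. y \<in> einterval a b \<Longrightarrow> isCont h y"
  shows "((\<lambda>u. LBINT y=0..u. h y) has_real_derivative h x) (at x)"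
proof -
  have xI: "a < ereal x" "ereal x < b" and zI: "a < 0" "0 < b"
    using assms by (auto simp: einterval_iff zero_ereal_def)
  have 1: "a < min 0 x" using xI zI by (simp add: min_def zero_ereal_def)
  from einterval_nonempty [OF 1] obtain d :: real where d: "a < d" "d < 0" "d < x"
    by (auto simp: einterval_def)
  have 2: "max 0 x < b" using xI zI by (simp add: max_def zero_ereal_def)
  from einterval_nonempty [OF 2] obtain e :: real where e: "0 < e" "x < e" "e < b"
    by (auto simp: einterval_def)
  have "((\<lambda>u. LBINT y=0..u. h y) has_vector_derivative h x) (at x within {d<..<e})"
  proof (rule has_vector_derivative_within_subset [of _ _ _ "{d..e}"])
    have "continuous_on {d..e} h"
    proof (intro continuous_at_imp_continuous_on ballI contf)
      fix y assume "y \<in> {d..e}"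
      then have "ereal d \<le> ereal y" "ereal y \<le> ereal e" by auto
      then show "y \<in> einterval a b" using d e
        unfolding einterval_iff by (meson less_le_trans le_less_trans)
    qed
    then show "((\<lambda>u. LBINT y=0..u. h y) has_vector_derivative h x) (at x within {d..e})"
      using interval_integral_FTC2[of d 0 e h x] d e by (simp add: zero_ereal_def)
  qed auto
  then have "((\<lambda>u. LBINT y=0..u. h y) has_vector_derivative h x) (at x)"
    using d e by (force simp: has_vector_derivative_within_open [of _ "{d<..<e}"])
  then show ?thesis by (simp add: has_real_derivative_iff_has_vector_derivative)
qed

lemma LBINT_same: "(LBINT y=(0::ereal)..ereal 0. h y) = 0"
  by (simp add: interval_lebesgue_integral_def einterval_same zero_ereal_def set_lebesgue_integral_def)

theorem lemma2p1:
  fixes C \<mu>0 d f0 :: real and a b :: ereal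
    and \<mu> f g :: "real \<Rightarrow> real"
  assumes ab: "a < 0" "0 < b"
    and ode: "\<forall>x. a < ereal x \<and> ereal x < b \<longrightarrow>
                 (\<mu> has_real_derivative (C + (\<mu> x)\<^sup>2)) (at x)"
    and init: "\<mu> 0 = \<mu>0"
    and f_def: "\<forall>x. f x = d * (LBINT y=0..x. exp (2 * (LBINT z=0..y. \<mu> z))) + f0"
    and g_def: "\<forall>x. g x = exp (- (LBINT z=0..x. \<mu> z))"
  shows "(\<exists>e1 e2 e3 :: real. (\<forall>x. a < ereal x \<and> ereal x < b \<longrightarrow>
              (f has_real_derivative (e1 * (f x)\<^sup>2 + e2 * f x + e3)) (at x)) \<and> f 0 = f0)
         \<and> (\<forall>x. a < ereal x \<and> ereal x < b \<longrightarrow>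
              g differentiable (at x) \<and> (deriv g has_real_derivative (- (C * g x))) (at x))
         \<and> g 0 = 1 \<and> deriv g 0 = - \<mu>0"
proof -
  define I where "I = einterval a b"
  have xI: "\<And>x. (a < ereal x \<and> ereal x < b) = (x \<in> I)" by (simp add: I_def einterval_iff)
  have zI: "0 \<in> I" using ab by (simp add: I_def einterval_iff zero_ereal_def)
  have oI: "open I" by (simp add: I_def)
  define M where "M = (\<lambda>u::real. LBINT z=0..u. \<mu> z)"
  define E where "E = (\<lambda>u::real. exp (2 * M u))"
  define F where "F = (\<lambda>u::real. LBINT y=0..u. E y)"
  have fF: "f = (\<lambda>x. d * F x + f0)" using f_def by (auto simp: F_def E_def M_def)
  have gM: "g = (\<lambda>x. exp (- M x))" using g_def by (auto simp: M_def)
  have \<mu>d: "\<And>x. x \<in> I \<Longrightarrow> (\<mu> has_real_derivative (C + (\<mu> x)\<^sup>2)) (at x)"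
    using ode xI by blast
  have \<mu>c: "\<And>x. x \<in> I \<Longrightarrow> isCont \<mu> x" by (rule DERIV_isCont[OF \<mu>d])
  have Md: "\<And>x. x \<in> I \<Longrightarrow> (M has_real_derivative \<mu> x) (at x)"
    unfolding M_def by (rule FTC_I[of a b]) (use zI \<mu>c in \<open>simp_all add: I_def\<close>)
  have Ed: "\<And>x. x \<in> I \<Longrightarrow> (E has_real_derivative E x * (2 * \<mu> x)) (at x)"
    unfolding E_def by (auto intro!: derivative_eq_intros Md)
  have Ec: "\<And>x. x \<in> I \<Longrightarrow> isCont E x" by (rule DERIV_isCont[OF Ed])
  have Fd: "\<And>x. x \<in> I \<Longrightarrow> (F has_real_derivative E x) (at x)"
    unfolding F_def by (rule FTC_I[of a b]) (use zI Ec in \<open>simp_all add: I_def\<close>)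
  have fd: "\<And>x. x \<in> I \<Longrightarrow> (f has_real_derivative d * E x) (at x)"
    unfolding fF by (auto intro!: derivative_eq_intros Fd)
  have M0: "M 0 = 0" by (simp add: M_def LBINT_same)
  have F0: "F 0 = 0" by (simp add: F_def LBINT_same)
  have f0: "f 0 = f0" by (simp add: fF F0)
  have E0: "E 0 = 1" by (simp add: E_def M0)
  define K where "K = C + \<mu>0^2"
  have c1: "\<And>x. x \<in> I \<Longrightarrow> (C + (\<mu> x)^2) * exp (-2 * M x) = K"
  proof -
    fix x assume x: "x \<in> I"
    have "(C + (\<mu> x)^2) * exp (-2 * M x) = (C + (\<mu> 0)^2) * exp (-2 * M 0)"
    proof (rule const_on_I[OF zI[unfolded I_def] x[unfolded I_def]])
      fix y assume "y \<in> einterval a b"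
      then have y: "y \<in> I" by (simp add: I_def)
      show "((\<lambda>u. (C + (\<mu> u)^2) * exp (-2 * M u)) has_real_derivative 0) (at y)"
        by (auto intro!: derivative_eq_intros Md[OF y] \<mu>d[OF y] simp: algebra_simps power2_eq_square)
    qed
    then show "(C + (\<mu> x)^2) * exp (-2 * M x) = K" by (simp add: M0 init K_def)
  qed
  have c1': "\<And>x. x \<in> I \<Longrightarrow> C + (\<mu> x)^2 = K * E x"
  proof -
    fix x assume x: "x \<in> I"
    have "K * E x = (C + (\<mu> x)^2) * (exp (-2 * M x) * exp (2 * M x))"
      using c1[OF x] by (simp add: E_def mult.assoc)
    also have "exp (-2 * M x) * exp (2 * M x) = 1" by (simp add: exp_add[symmetric])
    finally show "C + (\<mu> x)^2 = K * E x" by simp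
  qed
  have part1: "\<exists>e1 e2 e3 :: real. (\<forall>x. a < ereal x \<and> ereal x < b \<longrightarrow>
              (f has_real_derivative (e1 * (f x)\<^sup>2 + e2 * f x + e3)) (at x)) \<and> f 0 = f0"
  proof (cases "d = 0")
    case True
    show ?thesis
      by (rule exI[of _ 0], rule exI[of _ 0], rule exI[of _ 0]) (use fd True f0 in \<open>auto simp: xI\<close>)
  next
    case False
    define e1 where "e1 = K / d"
    define e2 where "e2 = 2 * (\<mu>0 - e1 * f0)"
    define e3 where "e3 = d - e1 * f0^2 - e2 * f0"
    have c2: "\<And>x. x \<in> I \<Longrightarrow> \<mu> x - e1 * f x = \<mu>0 - e1 * f0"
    proof -
      fix x assume x: "x \<in> I"
      have "\<mu> x - e1 * f x = \<mu> 0 - e1 * f 0"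
      proof (rule const_on_I[OF zI[unfolded I_def] x[unfolded I_def]])
        fix y assume "y \<in> einterval a b"
        then have y: "y \<in> I" by (simp add: I_def)
        have "((\<lambda>u. \<mu> u - e1 * f u) has_real_derivative (C + (\<mu> y)^2) - e1 * (d * E y)) (at y)"
          by (intro DERIV_diff DERIV_cmult \<mu>d[OF y] fd[OF y])
        moreover have "(C + (\<mu> y)^2) - e1 * (d * E y) = 0"
          using c1'[OF y] False by (simp add: e1_def)
        ultimately show "((\<lambda>u. \<mu> u - e1 * f u) has_real_derivative 0) (at y)" by simp
      qed
      then show "\<mu> x - e1 * f x = \<mu>0 - e1 * f0" by (simp add: init f0)
    qed
    have c3: "\<And>x. x \<in> I \<Longrightarrow> d * E x - (e1 * (f x)^2 + e2 * f x + e3) = 0"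
    proof -
      fix x assume x: "x \<in> I"
      have "d * E x - (e1 * (f x)^2 + e2 * f x + e3) = d * E 0 - (e1 * (f 0)^2 + e2 * f 0 + e3)"
      proof (rule const_on_I[OF zI[unfolded I_def] x[unfolded I_def]])
        fix y assume "y \<in> einterval a b"
        then have y: "y \<in> I" by (simp add: I_def)
        have h: "\<mu> y = e1 * f y + (\<mu>0 - e1 * f0)" using c2[OF y] by linarith
        show "((\<lambda>u. d * E u - (e1 * (f u)^2 + e2 * f u + e3)) has_real_derivative 0) (at y)"
          by (auto intro!: derivative_eq_intros Ed[OF y] fd[OF y] simp: h e2_def algebra_simps power2_eq_square)
      qed
      then show "d * E x - (e1 * (f x)^2 + e2 * f x + e3) = 0"
        by (simp add: E0 f0 e3_def power2_eq_square)
    qed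
    show ?thesis
    proof (intro exI conjI allI impI)
      fix x assume "a < ereal x \<and> ereal x < b"
      then have x: "x \<in> I" using xI by blast
      have "d * E x = e1 * (f x)^2 + e2 * f x + e3" using c3[OF x] by simp
      then show "(f has_real_derivative (e1 * (f x)\<^sup>2 + e2 * f x + e3)) (at x)"
        using fd[OF x] by simp
    qed (rule f0)
  qed
  have gd: "\<And>x. x \<in> I \<Longrightarrow> (g has_real_derivative - \<mu> x * g x) (at x)"
    unfolding gM by (auto intro!: derivative_eq_intros Md)
  have dg: "\<And>x. x \<in> I \<Longrightarrow> deriv g x = - \<mu> x * g x"
    using gd DERIV_imp_deriv by blast
  have part2: "\<And>x. x \<in> I \<Longrightarrow> g differentiable (at x) \<and> (deriv g has_real_derivative (- (C * g x))) (at x)"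
  proof
    fix x assume x: "x \<in> I"
    show "g differentiable (at x)" using gd[OF x] real_differentiable_def by blast
    have "((\<lambda>u. - \<mu> u * g u) has_real_derivative - (C * g x)) (at x)"
      by (auto intro!: derivative_eq_intros \<mu>d[OF x] gd[OF x] simp: algebra_simps power2_eq_square)
    then show "(deriv g has_real_derivative - (C * g x)) (at x)"
      by (rule has_field_derivative_transform_within_open[OF _ oI x]) (simp add: dg)
  qed
  have g0: "g 0 = 1" by (simp add: gM M0)
  have dg0: "deriv g 0 = - \<mu>0" using dg[OF zI] g0 init by simp
  have part2': "\<forall>x. a < ereal x \<and> ereal x < b \<longrightarrow>
              g differentiable (at x) \<and> (deriv g has_real_derivative (- (C * g x))) (at x)"
    using part2 xI by blast
  show ?thesis using part1 part2' g0 dg0 by (intro conjI)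
qed

end
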